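(* Let $S$ be a set of $n\ge 3$ points in the plane in general position (no four points of $S$ cocircular, no three collinear). Let $\Pi(S)$ be the Voronoi poset of $S$, ordered by inclusion. Then $\Pi(S)$ is graded, i.e. it has a unique minimal element and a unique maximal element, and every maximal chain in $\Pi(S)$ has the same length.
   Context: For points $x,y$ in the plane let $h(x,y)=\{p\in\mathbb{R}^2 : d(x,p)\le d(y,p)\}$. For $A\subseteq S$ let $V(A)=\bigcap_{x\in A,\,y\in S\setminus A} h(x,y)$ (which equals $\mathbb{R}^2$ for $A=\emptyset$ and $A=S$). Label the points of $S$ by $[n]=\{1,\dots,n\}$. The Voronoi poset $\Pi(S)$ is the set of label sets $L(A)\subseteq[n]$ of those subsets $A\subseteq S$ (of any size $0\le |A|\le n$) for which $V(A)\neq\emptyset$, partially ordered by set inclusion; its minimal element is $\emptyset$ and its maximal element is $[n]$. *)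

theory Defs
  imports "HOL-Analysis.Analysis"
begin

type_synonym point = "real^2"

definition hplane :: "point \<Rightarrow> point \<Rightarrow> point set" where
  "hplane x y = {q. dist x q \<le> dist y q}"

definition vcell :: "point set \<Rightarrow> point set \<Rightarrow> point set" where
  "vcell S A = (\<Inter>x\<in>A. \<Inter>y\<in>S - A. hplane x y)"

definition voronoi_poset :: "nat \<Rightarrow> (nat \<Rightarrow> point) \<Rightarrow> nat set set" where
  "voronoi_poset n p = {L. L \<subseteq> {1..n} \<and> vcell (p ` {1..n}) (p ` L) \<noteq> {}}"

definition cocircular :: "point set \<Rightarrow> bool" where
  "cocircular A \<longleftrightarrow> (\<exists>c r. \<forall>x\<in>A. dist c x = r)"

definition general_position :: "point set \<Rightarrow> bool" where
  "general_position S \<longleftrightarrow>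
     (\<forall>T\<subseteq>S. card T = 3 \<longrightarrow> \<not> collinear T) \<and>
     (\<forall>T\<subseteq>S. card T = 4 \<longrightarrow> \<not> cocircular T)"

definition is_chain_in :: "'a set set \<Rightarrow> 'a set set \<Rightarrow> bool" where
  "is_chain_in P C \<longleftrightarrow> C \<subseteq> P \<and> (\<forall>A\<in>C. \<forall>B\<in>C. A \<subseteq> B \<or> B \<subseteq> A)"

definition is_maximal_chain_in :: "'a set set \<Rightarrow> 'a set set \<Rightarrow> bool" where
  "is_maximal_chain_in P C \<longleftrightarrow> is_chain_in P C \<and> (\<forall>D. is_chain_in P D \<and> C \<subseteq> D \<longrightarrow> D = C)"

text \<open>Graded (finite) poset under inclusion: least and greatest element, and all
  maximal chains have the same length (length = cardinality - 1).\<close>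
definition graded_poset :: "'a set set \<Rightarrow> bool" where
  "graded_poset P \<longleftrightarrow>
     (\<exists>m\<in>P. \<forall>x\<in>P. m \<subseteq> x) \<and> (\<exists>M\<in>P. \<forall>x\<in>P. x \<subseteq> M) \<and>
     (\<forall>C D. is_maximal_chain_in P C \<and> is_maximal_chain_in P D \<longrightarrow> card C = card D)"

end

theory Submission
  imports Defs
begin

lemma dist_sq_expand: "(dist a q)^2 = inner a a - 2 * inner a q + inner q q" for a q :: "'a::real_inner"
  by (simp add: dist_norm power2_norm_eq_inner inner_diff_left inner_diff_right inner_commute)

lemma hconv:
  fixes a b u v :: "'a::real_inner"
  assumes "dist a u \<le> dist b u" "dist a v \<le> dist b v" "0 \<le> t" "t \<le> 1"
  shows "dist a ((1-t) *\<^sub>R u + t *\<^sub>R v) \<le> dist b ((1-t) *\<^sub>R u + t *\<^sub>R v)"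
proof -
  define q where "q = (1-t) *\<^sub>R u + t *\<^sub>R v"
  have u: "inner a a - 2 * inner a u \<le> inner b b - 2 * inner b u"
    using power_mono[OF assms(1) zero_le_dist, of 2] by (simp add: dist_sq_expand)
  have v: "inner a a - 2 * inner a v \<le> inner b b - 2 * inner b v"
    using power_mono[OF assms(2) zero_le_dist, of 2] by (simp add: dist_sq_expand)
  have ia: "inner a q = (1-t) * inner a u + t * inner a v" "inner b q = (1-t) * inner b u + t * inner b v"
    by (simp_all add: q_def inner_add_right)
  have "(1-t) * (inner a a - 2 * inner a u) \<le> (1-t) * (inner b b - 2 * inner b u)"
    using u assms by (intro mult_left_mono) auto
  moreover have "t * (inner a a - 2 * inner a v) \<le> t * (inner b b - 2 * inner b v)"
    using v assms by (intro mult_left_mono) auto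
  ultimately have "inner a a - 2 * inner a q \<le> inner b b - 2 * inner b q"
    unfolding ia by (simp add: algebra_simps)
  then have "(dist a q)^2 \<le> (dist b q)^2" by (simp add: dist_sq_expand)
  then show ?thesis unfolding q_def[symmetric] by (simp add: power2_le_iff_abs_le) 
qed
definition good :: "(nat \<Rightarrow> real^2) \<Rightarrow> nat \<Rightarrow> nat set \<Rightarrow> real^2 \<Rightarrow> bool" where
  "good p n L q \<longleftrightarrow> (\<forall>i\<in>L. \<forall>j\<in>{1..n}-L. dist (p i) q \<le> dist (p j) q)"

lemma pick:
  fixes d :: "nat \<Rightarrow> real"
  assumes "finite X" "X \<noteq> {}"
  obtains z where "z \<in> X" "\<forall>y\<in>X. d z \<le> d y"
proof -
  have "Min (d ` X) \<in> d ` X" using assms by (intro Min_in) auto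
  then obtain z where "z \<in> X" "d z = Min (d ` X)" by auto
  then show ?thesis using that assms by (metis Min_le finite_imageI imageI)
qed

lemma conn01:
  fixes E1 E2 :: "real set"
  assumes "closed E1" "closed E2" "0 \<in> E1" "1 \<in> E2" "{0..1} \<subseteq> E1 \<union> E2"
  obtains t where "t \<in> E1" "t \<in> E2" "0 \<le> t" "t \<le> 1"
proof -
  have "\<not> (E1 \<inter> E2 \<inter> {0..1} = {})"
  proof
    assume "E1 \<inter> E2 \<inter> {0..1} = {}"
    moreover have "E1 \<inter> {0..1} \<noteq> {}" "E2 \<inter> {0..1} \<noteq> {}" using assms by auto
    ultimately show False using connected_closedD[of "{0..1::real}" E1 E2] assms(1,2,5) by auto
  qed
  then show ?thesis using that by auto
qed

lemma interp:
  assumes AB: "A \<subseteq> B" "B \<subseteq> {1..n}" "2 \<le> card (B-A)"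
    and gA: "good p n A qa" and gB: "good p n B qb"
  shows "\<exists>q. \<exists>z\<in>B-A. good p n (insert z A) q"
proof -
  define q where "q t = (1-t) *\<^sub>R qa + t *\<^sub>R qb" for t :: real
  define f where "f i t = dist (p i) (q t)" for i t
  have fin: "finite (B - A)" using AB by (meson Diff_subset finite_atLeastAtMost finite_subset subset_trans)
  have ne: "B - A \<noteq> {}" using AB(3) by (metis card.empty not_numeral_le_zero)
  have W: "f i t \<le> f j t" if "i \<in> A" "j \<in> {1..n} - B" "0 \<le> t" "t \<le> 1" for i j t
  proof -
    have "j \<notin> A" "j \<in> {1..n}" "i \<in> B" using that AB by auto
    then have "dist (p i) qa \<le> dist (p j) qa" "dist (p i) qb \<le> dist (p j) qb"
      using gA gB that unfolding good_def by auto
    then show ?thesis unfolding f_def q_def using that by (intro hconv)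
  qed
  have key: "\<exists>z\<in>B-A. good p n (insert z A) (q t)"
    if E1: "\<forall>i\<in>A. \<forall>z\<in>B-A. f i t \<le> f z t"
      and E2: "(\<exists>i\<in>A. \<exists>z\<in>B-A. f z t \<le> f i t) \<or> t = 1"
      and t: "0 \<le> t" "t \<le> 1" for t
  proof -
    obtain z0 where z0: "z0 \<in> B - A" "\<forall>y\<in>B-A. f z0 t \<le> f y t"
      using pick[OF fin ne, of "\<lambda>i. f i t"] by blast
    have z0out: "f z0 t \<le> f j t" if jB: "j \<in> {1..n} - B" for j
      using E2
    proof
      assume "\<exists>i\<in>A. \<exists>z\<in>B-A. f z t \<le> f i t"
      then obtain i z where "i \<in> A" "z \<in> B - A" "f z t \<le> f i t" by blast
      moreover then have "f z0 t \<le> f z t" "f i t \<le> f j t" using z0 W[of i j t] jB t by auto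
      ultimately show ?thesis by linarith
    next
      assume "t = 1"
      then have "q t = qb" by (simp add: q_def)
      then show ?thesis using gB z0 jB unfolding good_def f_def by auto
    qed
    have "good p n (insert z0 A) (q t)"
      unfolding good_def
    proof (intro ballI)
      fix i j assume i: "i \<in> insert z0 A" and j: "j \<in> {1..n} - insert z0 A"
      show "dist (p i) (q t) \<le> dist (p j) (q t)"
      proof (cases "j \<in> B")
        case True
        then show ?thesis using i j E1 z0 unfolding f_def by auto
      next
        case False
        then show ?thesis using i j z0out W[of i j t] t unfolding f_def by auto
      qed
    qed
    then show ?thesis using z0 by blast
  qed
  define E1 where "E1 = {t. \<forall>i\<in>A. \<forall>z\<in>B-A. f i t \<le> f z t}"
  define E2 where "E2 = {t. \<exists>i\<in>A. \<exists>z\<in>B-A. f z t \<le> f i t}"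
  have cont: "continuous_on UNIV (f i)" for i
  proof -
    have "continuous_on UNIV (\<lambda>t::real. dist (p i) ((1-t) *\<^sub>R qa + t *\<^sub>R qb))"
      by (intro continuous_intros)
    moreover have "f i = (\<lambda>t::real. dist (p i) ((1-t) *\<^sub>R qa + t *\<^sub>R qb))"
      by (simp add: fun_eq_iff f_def q_def)
    ultimately show ?thesis by simp
  qed
  have finA: "finite A" using AB by (meson finite_atLeastAtMost finite_subset subset_trans)
  have cE1: "closed E1"
  proof -
    have "E1 = (\<Inter>i\<in>A. \<Inter>z\<in>B-A. {t. f i t \<le> f z t})" unfolding E1_def by blast
    moreover have "closed (\<Inter>i\<in>A. \<Inter>z\<in>B-A. {t. f i t \<le> f z t})"
      by (intro closed_INT ballI closed_Collect_le cont)
    ultimately show ?thesis by simp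
  qed
  have cE2: "closed E2"
  proof -
    have "E2 = (\<Union>i\<in>A. \<Union>z\<in>B-A. {t. f z t \<le> f i t})" unfolding E2_def by blast
    moreover have "closed (\<Union>i\<in>A. \<Union>z\<in>B-A. {t. f z t \<le> f i t})"
      by (intro closed_UN ballI closed_Collect_le cont finite_imageI finA fin)
    ultimately show ?thesis by simp
  qed
  show ?thesis
  proof (cases "1 \<in> E1")
    case True
    then show ?thesis using key[of 1] unfolding E1_def by auto
  next
    case False
    then have "1 \<in> E2" unfolding E1_def E2_def by (auto simp: not_le intro: less_imp_le)
    moreover have "0 \<in> E1" unfolding E1_def f_def q_def using gA AB by (auto simp: good_def)
    moreover have "{0..1::real} \<subseteq> E1 \<union> E2" unfolding E1_def E2_def by (auto simp: not_le intro: less_imp_le)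
    ultimately obtain t where "t \<in> E1" "t \<in> E2" "0 \<le> t" "t \<le> 1"
      using conn01[OF cE1 cE2] by blast
    then show ?thesis using key[of t] unfolding E1_def E2_def by auto
  qed
qed
lemma chain_cmp:
  assumes "is_chain_in P C" "X \<in> C" "Y \<in> C" "finite X" "finite Y" "card X \<le> card Y"
  shows "X \<subseteq> Y"
proof -
  have "X \<subseteq> Y \<or> Y \<subseteq> X" using assms(1-3) unfolding is_chain_in_def by blast
  then show ?thesis
  proof
    assume "Y \<subseteq> X"
    then have "card Y \<le> card X" using assms(4) by (simp add: card_mono)
    then have "card Y = card X" using assms(6) by simp
    then have "Y = X" using \<open>Y \<subseteq> X\<close> assms(4) by (simp add: card_subset_eq)
    then show ?thesis by simp
  qed simp
qed

lemma maxchain_card: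
  fixes P :: "nat set set"
  assumes PP: "P \<subseteq> Pow {1..n}" and P0: "{} \<in> P" and Pn: "{1..n} \<in> P"
    and IP: "\<And>A B. A \<in> P \<Longrightarrow> B \<in> P \<Longrightarrow> A \<subseteq> B \<Longrightarrow> card A + 2 \<le> card B \<Longrightarrow>
              \<exists>Y\<in>P. A \<subseteq> Y \<and> Y \<subseteq> B \<and> card A < card Y \<and> card Y < card B"
    and MC: "is_maximal_chain_in P C"
  shows "card C = Suc n"
proof -
  have ch: "is_chain_in P C" using MC unfolding is_maximal_chain_in_def by blast
  have mx: "D = C" if "is_chain_in P D" "C \<subseteq> D" for D
    using MC that unfolding is_maximal_chain_in_def by blast
  have CP: "C \<subseteq> P" using ch unfolding is_chain_in_def by blast
  have finX: "finite X" if "X \<in> C" for X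
    using that CP PP by (meson Pow_iff finite_atLeastAtMost finite_subset subsetD)
  have subn: "X \<subseteq> {1..n}" if "X \<in> C" for X using that CP PP by blast
  have finC: "finite C" using CP PP by (meson finite_Pow_iff finite_atLeastAtMost finite_subset subset_trans)
  have ins: "Y \<in> C" if "Y \<in> P" "\<forall>D\<in>C. D \<subseteq> Y \<or> Y \<subseteq> D" for Y
  proof -
    have "is_chain_in P (insert Y C)" using ch that unfolding is_chain_in_def by blast
    then have "insert Y C = C" by (intro mx) auto
    then show ?thesis by blast
  qed
  have C0: "{} \<in> C" by (rule ins[OF P0]) simp
  have Cn: "{1..n} \<in> C" by (rule ins[OF Pn]) (use subn in blast)
  have injC: "inj_on card C"
  proof (rule inj_onI)
    fix x y assume xy: "x \<in> C" "y \<in> C" "card x = card y"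
    have "x \<subseteq> y" using chain_cmp[OF ch xy(1) xy(2)] finX xy by simp
    moreover have "y \<subseteq> x" using chain_cmp[OF ch xy(2) xy(1)] finX xy by simp
    ultimately show "x = y" by blast
  qed
  have img: "card ` C = {0..n}"
  proof
    show "card ` C \<subseteq> {0..n}"
    proof
      fix c assume "c \<in> card ` C"
      then obtain X where "X \<in> C" "c = card X" by blast
      then have "c \<le> card {1..n}" using subn[OF \<open>X \<in> C\<close>] by (metis card_mono finite_atLeastAtMost)
      then show "c \<in> {0..n}" by simp
    qed
  next
    show "{0..n} \<subseteq> card ` C"
    proof (rule ccontr)
      assume "\<not> {0..n} \<subseteq> card ` C"
      then obtain k where k: "k \<le> n" "k \<notin> card ` C" by (meson atLeastAtMost_iff le0 subsetI)
      have c0: "0 \<in> card ` C" using C0 by force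
      have cn: "n \<in> card ` C" using Cn by force
      define La where "La = {c \<in> card ` C. c < k}"
      define Lb where "Lb = {c \<in> card ` C. k < c}"
      have "k \<noteq> 0" using k c0 by auto
      then have "0 \<in> La" using c0 La_def by auto
      have "k \<noteq> n" using k cn by auto
      then have "n \<in> Lb" using cn k Lb_def by auto
      have fLa: "finite La" "finite Lb" using finC La_def Lb_def by auto
      define a where "a = Max La"
      define b where "b = Min Lb"
      have aLa: "a \<in> La" unfolding a_def using fLa \<open>0 \<in> La\<close> by (intro Max_in) auto
      have bLb: "b \<in> Lb" unfolding b_def using fLa \<open>n \<in> Lb\<close> by (intro Min_in) auto
      have amax: "c \<le> a" if "c \<in> card ` C" "c < k" for c
        using that fLa unfolding a_def La_def by (intro Max_ge) auto
      have bmin: "b \<le> c" if "c \<in> card ` C" "k < c" for c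
        using that fLa unfolding b_def Lb_def by (intro Min_le) auto
      obtain XA where XA: "XA \<in> C" "card XA = a" using aLa La_def by auto
      obtain XB where XB: "XB \<in> C" "card XB = b" using bLb Lb_def by auto
      have ak: "a < k" "k < b" using aLa bLb La_def Lb_def by auto
      have "XA \<subseteq> XB" using chain_cmp[OF ch XA(1) XB(1)] finX XA XB ak by auto
      then obtain Y where Y: "Y \<in> P" "XA \<subseteq> Y" "Y \<subseteq> XB" "a < card Y" "card Y < b"
        using IP[of XA XB] CP XA XB ak by fastforce
      have "\<forall>D\<in>C. D \<subseteq> Y \<or> Y \<subseteq> D"
      proof
        fix D assume D: "D \<in> C"
        have "card D \<noteq> k" using D k by auto
        then have "card D < k \<or> k < card D" by auto
        then show "D \<subseteq> Y \<or> Y \<subseteq> D"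
        proof
          assume "card D < k"
          then have "card D \<le> card XA" using amax D XA by auto
          then have "D \<subseteq> XA" using chain_cmp[OF ch D XA(1)] finX D XA by auto
          then show ?thesis using Y by blast
        next
          assume "k < card D"
          then have "card XB \<le> card D" using bmin D XB by auto
          then have "XB \<subseteq> D" using chain_cmp[OF ch XB(1) D] finX D XB by auto
          then show ?thesis using Y by blast
        qed
      qed
      then have "Y \<in> C" using ins Y by blast
      then have "card Y \<in> card ` C" by blast
      moreover have "card Y \<noteq> k" using \<open>card Y \<in> card ` C\<close> k by auto
      ultimately show False using amax bmin Y by (meson leD linorder_neqE_nat)
    qed
  qed
  have "card C = card (card ` C)" using injC by (simp add: card_image)
  also have "\<dots> = Suc n" using img by simp
  finally show ?thesis .
qed

lemma mem:
  assumes inj: "inj_on p {1..n}"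
  shows "L \<in> voronoi_poset n p \<longleftrightarrow> L \<subseteq> {1..n} \<and> (\<exists>q. good p n L q)"
proof -
  have eq: "q \<in> vcell (p ` {1..n}) (p ` L) \<longleftrightarrow> good p n L q" if L: "L \<subseteq> {1..n}" for q
  proof -
    have d: "p ` {1..n} - p ` L = p ` ({1..n} - L)"
      by (rule inj_on_image_set_diff[OF inj, symmetric]) (use L in auto)
    show ?thesis unfolding vcell_def d hplane_def good_def by simp
  qed
  show ?thesis
  proof
    assume "L \<in> voronoi_poset n p"
    then have L: "L \<subseteq> {1..n}" and ne: "vcell (p ` {1..n}) (p ` L) \<noteq> {}"
      unfolding voronoi_poset_def by blast+
    then obtain q where "q \<in> vcell (p ` {1..n}) (p ` L)" by blast
    then show "L \<subseteq> {1..n} \<and> (\<exists>q. good p n L q)" using eq[OF L] L by blast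
  next
    assume "L \<subseteq> {1..n} \<and> (\<exists>q. good p n L q)"
    then obtain q where L: "L \<subseteq> {1..n}" and g: "good p n L q" by blast
    then have "q \<in> vcell (p ` {1..n}) (p ` L)" using eq[OF L] by blast
    then show "L \<in> voronoi_poset n p" using L unfolding voronoi_poset_def by blast
  qed
qed

theorem mainTheorem2:
  fixes n :: nat and p :: "nat \<Rightarrow> real^2"
  assumes "n \<ge> 3"
    and "inj_on p {1..n}"
    and "general_position (p ` {1..n})"
  shows "graded_poset (voronoi_poset n p)"
proof -
  define P where "P = voronoi_poset n p"
  note M = mem[OF assms(2), folded P_def]
  have P0: "{} \<in> P" using M[of "{}"] by (simp add: good_def)
  have Pn: "{1..n} \<in> P" using M[of "{1..n}"] by (simp add: good_def)
  have PP: "P \<subseteq> Pow {1..n}" using M by blast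
  have IP: "\<exists>Y\<in>P. A \<subseteq> Y \<and> Y \<subseteq> B \<and> card A < card Y \<and> card Y < card B"
    if A: "A \<in> P" and B: "B \<in> P" and AB: "A \<subseteq> B" and c: "card A + 2 \<le> card B" for A B
  proof -
    obtain qa where qa: "good p n A qa" using A M by blast
    obtain qb where qb: "good p n B qb" and Bn: "B \<subseteq> {1..n}" using B M by blast
    have finA: "finite A" using AB Bn by (meson finite_atLeastAtMost finite_subset subset_trans)
    have "card (B - A) = card B - card A" using finA AB by (simp add: card_Diff_subset)
    then have c2: "2 \<le> card (B - A)" using c by simp
    obtain q z where z: "z \<in> B - A" "good p n (insert z A) q"
      using interp[OF AB Bn c2 qa qb] by blast
    have YP: "insert z A \<in> P" using M z Bn AB by blast
    have cY: "card (insert z A) = Suc (card A)" using finA z by simp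
    have "A \<subseteq> insert z A" "insert z A \<subseteq> B" using z AB by blast+
    moreover have "card A < card (insert z A)" "card (insert z A) < card B" using cY c by linarith+
    ultimately show ?thesis using YP by blast
  qed
  have "card C = Suc n" if "is_maximal_chain_in P C" for C
    using maxchain_card[OF PP P0 Pn, of C] IP that by blast
  then have g3: "\<forall>C D. is_maximal_chain_in P C \<and> is_maximal_chain_in P D \<longrightarrow> card C = card D"
    by simp
  have g1: "\<exists>m\<in>P. \<forall>x\<in>P. m \<subseteq> x" using P0 by blast
  have g2: "\<exists>M\<in>P. \<forall>x\<in>P. x \<subseteq> M" using Pn PP by blast
  show ?thesis unfolding graded_poset_def P_def[symmetric] using g1 g2 g3 by (intro conjI)
qed

end
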